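(* In the $k$-item $k$-bidder environment (any set of at most $k$ bidders may be allocated, and there are $k$ real bidders) with real bidder values drawn i.i.d. from the exponential distribution with mean $1$, the Deferred-Revelation Auction (DRA) over a public ledger, as described in the context, is not credible for any collateral $f<1$.
   Context: Bidders are quasi-linear with independent values; the exponential distribution with mean $1$ has CDF $1-e^{-t}$, virtual value $\varphi(v)=v-1$, monopoly reserve $1$. DRA over a public ledger (visible to all) with a perfectly hiding, perfectly binding, non-malleable commitment scheme: (1) every participant (real bidders and any fake bids fabricated by the auctioneer) commits to an identifier and a bid and deposits collateral $f$; the auctioneer declares a matroid feasibility constraint $\hat{\mathcal{F}}$ and distributions $\hat D_j$ (virtual values $\hat\varphi_j$) for all committed bids; (2) each committed bid is revealed or concealed, and collateral of concealed bids is burnt; (3) among revealed bids, the set $S\in\hat{\mathcal{F}}$ maximizing $\sum_{i\in S}\hat\varphi_i(b_i)$ (lexicographic tie-breaking) is allocated, each allocated bidder paying its critical bid (infimum bid at which it stays allocated). The auctioneer may fabricate bids, misreport distributions and constraint (keeping the allocated real bidders feasible in the true constraint), and choose which fake bids to conceal after seeing revealed real bids. Its revenue is real bidders' payments minus burnt collateral of its concealed fake bids. The DRA is credible for collateral $f$ if, when real bidders bid truthfully, the auctioneer maximizes expected revenue by fabricating no bids and reporting true distributions and constraint. *)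

theory Defs
  imports "HOL-Probability.Probability"
begin

text \<open>Participants are indexed by natural numbers: real bidders are 0..<k,
  fake bids fabricated by the auctioneer are k..<k+m.  All bids live in [0,\<infinity>).\<close>

definition matroid :: "nat set \<Rightarrow> nat set set \<Rightarrow> bool" where
  "matroid E I \<longleftrightarrow> finite E \<and> {} \<in> I \<and> (\<forall>S\<in>I. S \<subseteq> E) \<and>
     (\<forall>S T. T \<in> I \<longrightarrow> S \<subseteq> T \<longrightarrow> S \<in> I) \<and>
     (\<forall>S T. S \<in> I \<longrightarrow> T \<in> I \<longrightarrow> card S < card T \<longrightarrow> (\<exists>x\<in>T - S. insert x S \<in> I))"

definition valid_dist :: "(real \<Rightarrow> real) \<Rightarrow> bool" where
  "valid_dist p \<longleftrightarrow> (\<forall>t<0. p t = 0) \<and> (\<forall>t\<ge>0. 0 < p t) \<and>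
     continuous_on {0..} p \<and> (p has_integral 1) {0..}"

definition dcdf :: "(real \<Rightarrow> real) \<Rightarrow> real \<Rightarrow> real" where
  "dcdf p x = integral {0..x} p"

definition vvirt :: "(real \<Rightarrow> real) \<Rightarrow> real \<Rightarrow> real" where
  "vvirt p b = b - (1 - dcdf p b) / p b"

definition lex_pref :: "nat set \<Rightarrow> nat set \<Rightarrow> bool" where
  "lex_pref S T \<longleftrightarrow> (\<exists>j. j \<in> S \<and> j \<notin> T \<and> (\<forall>i<j. i \<in> S \<longleftrightarrow> i \<in> T))"

definition dra_alloc :: "nat set set \<Rightarrow> (nat \<Rightarrow> real \<Rightarrow> real) \<Rightarrow> nat set \<Rightarrow> (nat \<Rightarrow> real) \<Rightarrow> nat set" where
  "dra_alloc F phi R b =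
     (let cands = {S \<in> F. S \<subseteq> R};
          val = (\<lambda>S. \<Sum>i\<in>S. phi i (b i));
          opt = {S \<in> cands. \<forall>T\<in>cands. val T \<le> val S}
      in THE S. S \<in> opt \<and> (\<forall>T\<in>opt. T \<noteq> S \<longrightarrow> lex_pref S T))"

definition dra_crit :: "nat set set \<Rightarrow> (nat \<Rightarrow> real \<Rightarrow> real) \<Rightarrow> nat set \<Rightarrow> (nat \<Rightarrow> real) \<Rightarrow> nat \<Rightarrow> real" where
  "dra_crit F phi R b i = Inf {x. 0 \<le> x \<and> i \<in> dra_alloc F phi R (b(i := x))}"

text \<open>Auctioneer strategy: number of fake bids, fake bid values, declared densities of all
  committed bids, declared constraint, and concealment policy (a function of the revealed
  real bids).\<close>
record auct_strategy =
  nfake :: nat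
  fbid :: "nat \<Rightarrow> real"
  decl :: "nat \<Rightarrow> real \<Rightarrow> real"
  constr :: "nat set set"
  conceal :: "(nat \<Rightarrow> real) \<Rightarrow> nat set"

definition bidvec :: "nat \<Rightarrow> auct_strategy \<Rightarrow> (nat \<Rightarrow> real) \<Rightarrow> nat \<Rightarrow> real" where
  "bidvec k s v = (\<lambda>i. if i < k then v i else fbid s i)"

definition revealed :: "nat \<Rightarrow> auct_strategy \<Rightarrow> (nat \<Rightarrow> real) \<Rightarrow> nat set" where
  "revealed k s v = {0..<k + nfake s} - conceal s v"

definition dra_outcome :: "nat \<Rightarrow> auct_strategy \<Rightarrow> (nat \<Rightarrow> real) \<Rightarrow> nat set" where
  "dra_outcome k s v = dra_alloc (constr s) (\<lambda>i. vvirt (decl s i)) (revealed k s v) (bidvec k s v)"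

text \<open>Auctioneer revenue: payments of allocated real bidders minus burnt collateral of
  concealed fake bids.\<close>
definition revenue :: "nat \<Rightarrow> real \<Rightarrow> auct_strategy \<Rightarrow> (nat \<Rightarrow> real) \<Rightarrow> real" where
  "revenue k f s v =
     (\<Sum>i\<in>{..<k} \<inter> dra_outcome k s v.
        dra_crit (constr s) (\<lambda>i. vvirt (decl s i)) (revealed k s v) (bidvec k s v) i)
     - f * real (card (conceal s v))"

text \<open>Admissible deviations in the k-item k-bidder environment (true constraint: any set of at
  most k real bidders is feasible).\<close>
definition admissible :: "nat \<Rightarrow> auct_strategy \<Rightarrow> bool" where
  "admissible k s \<longleftrightarrow>
     (\<forall>i\<in>{k..<k + nfake s}. 0 \<le> fbid s i) \<and>
     (\<forall>i<k + nfake s. valid_dist (decl s i)) \<and>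
     matroid {0..<k + nfake s} (constr s) \<and>
     (\<forall>v. conceal s v \<subseteq> {k..<k + nfake s}) \<and>
     (\<forall>v. card (dra_outcome k s v \<inter> {..<k}) \<le> k)"

definition honest :: "nat \<Rightarrow> auct_strategy" where
  "honest k = \<lparr> nfake = 0, fbid = (\<lambda>_. 0), decl = (\<lambda>_. exponential_density 1),
                constr = {S. S \<subseteq> {0..<k} \<and> card S \<le> k}, conceal = (\<lambda>_. {}) \<rparr>"

definition bids_measure :: "nat \<Rightarrow> (nat \<Rightarrow> real) measure" where
  "bids_measure k = PiM {..<k} (\<lambda>_. density lborel (exponential_density 1))"

definition exp_revenue :: "nat \<Rightarrow> real \<Rightarrow> auct_strategy \<Rightarrow> real" where
  "exp_revenue k f s = integral\<^sup>L (bids_measure k) (revenue k f s)"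

definition dra_credible :: "nat \<Rightarrow> real \<Rightarrow> bool" where
  "dra_credible k f \<longleftrightarrow>
     (\<forall>s. admissible k s \<and> integrable (bids_measure k) (revenue k f s) \<longrightarrow>
          exp_revenue k f s \<le> exp_revenue k f (honest k))"

end

theory Submission
  imports Defs
begin

lemma dcdf_exp: "0 \<le> x \<Longrightarrow> dcdf (exponential_density 1) x = 1 - exp (- x)"
proof -
  assume x: "0 \<le> x"
  have "((\<lambda>t. exp (- t)) has_integral ((- exp (- x)) - (- exp (- 0)))) {0..x}"
    apply (rule fundamental_theorem_of_calculus[OF x])
    apply (subst has_real_derivative_iff_has_vector_derivative[symmetric])
    apply (auto intro!: derivative_eq_intros)
    done
  hence "integral {0..x} (\<lambda>t. exp (- t)) = 1 - exp (- x)" by (simp add: integral_unique)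
  moreover have "integral {0..x} (exponential_density 1) = integral {0..x} (\<lambda>t. exp (- t))"
    by (rule integral_cong) (auto simp: exponential_density_def)
  ultimately show ?thesis by (simp add: dcdf_def)
qed

lemma vv_exp: "vvirt (exponential_density 1) x = (if x < 0 then x else x - 1)"
proof (cases "x < 0")
  case True then show ?thesis by (simp add: vvirt_def exponential_density_def)
next
  case False then show ?thesis by (simp add: vvirt_def dcdf_exp exponential_density_def)
qed

lemma vv_ge: "0 \<le> c \<Longrightarrow> (c \<le> vvirt (exponential_density 1) x) = (c + 1 \<le> x)"
  by (auto simp: vv_exp)

lemma lex_asym: "lex_pref S T \<Longrightarrow> \<not> lex_pref T S"
proof
  assume a: "lex_pref S T" and b: "lex_pref T S"
  from a obtain j where j: "j \<in> S" "j \<notin> T" "\<forall>i<j. i \<in> S \<longleftrightarrow> i \<in> T" unfolding lex_pref_def by blast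
  from b obtain j' where j': "j' \<in> T" "j' \<notin> S" "\<forall>i<j'. i \<in> T \<longleftrightarrow> i \<in> S" unfolding lex_pref_def by blast
  show False
  proof (cases j j' rule: linorder_cases)
    case less then show ?thesis using j j' by blast
  next
    case equal then show ?thesis using j j' by blast
  next
    case greater then show ?thesis using j j' by blast
  qed
qed

lemma lex_intro:
  fixes S T :: "nat set"
  assumes "finite S" "S \<noteq> T" "\<And>j. j \<in> T - S \<Longrightarrow> \<exists>i\<in>S - T. i < j"
  shows "lex_pref S T"
proof -
  have ne: "S - T \<noteq> {}"
  proof
    assume "S - T = {}"
    with assms(2) obtain j where "j \<in> T - S" by blast
    with assms(3)[of j] \<open>S - T = {}\<close> show False by blast
  qed
  define j where "j = Min (S - T)"
  have j: "j \<in> S - T" using ne assms(1) unfolding j_def by (intro Min_in) auto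
  have jm: "\<And>i. i \<in> S - T \<Longrightarrow> j \<le> i" using assms(1) unfolding j_def by (intro Min_le) auto
  show ?thesis unfolding lex_pref_def
  proof (intro exI[of _ j] conjI allI impI)
    show "j \<in> S" "j \<notin> T" using j by auto
    fix i assume "i < j"
    show "i \<in> S \<longleftrightarrow> i \<in> T"
    proof
      assume "i \<in> S" then show "i \<in> T" using jm[of i] \<open>i < j\<close> by (meson DiffI leD)
    next
      assume "i \<in> T"
      show "i \<in> S"
      proof (rule ccontr)
        assume "i \<notin> S"
        then obtain i' where "i' \<in> S - T" "i' < i" using assms(3)[of i] \<open>i \<in> T\<close> by blast
        with jm[of i'] \<open>i < j\<close> show False by linarith
      qed
    qed
  qed
qed

lemma the_lex:
  assumes "S \<in> Q" "\<forall>T\<in>Q. T \<noteq> S \<longrightarrow> lex_pref S T"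
  shows "(THE S. S \<in> Q \<and> (\<forall>T\<in>Q. T \<noteq> S \<longrightarrow> lex_pref S T)) = S"
proof (rule the_equality)
  show "S \<in> Q \<and> (\<forall>T\<in>Q. T \<noteq> S \<longrightarrow> lex_pref S T)" using assms by blast
  fix S' assume S': "S' \<in> Q \<and> (\<forall>T\<in>Q. T \<noteq> S' \<longrightarrow> lex_pref S' T)"
  show "S' = S"
  proof (rule ccontr)
    assume ne: "S' \<noteq> S"
    then have "lex_pref S S'" "lex_pref S' S" using S' assms by auto
    then show False using lex_asym by blast
  qed
qed

lemma alloc_eqI:
  assumes "S \<in> F" "S \<subseteq> R"
    and "\<And>T. T \<in> F \<Longrightarrow> T \<subseteq> R \<Longrightarrow> (\<Sum>i\<in>T. phi i (b i)) \<le> (\<Sum>i\<in>S. phi i (b i))"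
    and "\<And>T. T \<in> F \<Longrightarrow> T \<subseteq> R \<Longrightarrow> (\<Sum>i\<in>T. phi i (b i)) = (\<Sum>i\<in>S. phi i (b i)) \<Longrightarrow> T \<noteq> S \<Longrightarrow> lex_pref S T"
  shows "dra_alloc F phi R b = S"
  unfolding dra_alloc_def Let_def
proof (rule the_lex)
  let ?O = "{S' \<in> {S \<in> F. S \<subseteq> R}. \<forall>T\<in>{S \<in> F. S \<subseteq> R}. (\<Sum>i\<in>T. phi i (b i)) \<le> (\<Sum>i\<in>S'. phi i (b i))}"
  show "S \<in> ?O" using assms(1,2,3) by blast
  show "\<forall>T\<in>?O. T \<noteq> S \<longrightarrow> lex_pref S T"
  proof (intro ballI impI)
    fix T assume T: "T \<in> ?O" "T \<noteq> S"
    then have "T \<in> F" "T \<subseteq> R" "(\<Sum>i\<in>S. phi i (b i)) \<le> (\<Sum>i\<in>T. phi i (b i))" using assms(1,2) by auto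
    moreover have "(\<Sum>i\<in>T. phi i (b i)) \<le> (\<Sum>i\<in>S. phi i (b i))" using assms(3) calculation by blast
    ultimately show "lex_pref S T" using assms(4) T(2) by simp
  qed
qed

lemma sum_pos_part:
  fixes w :: "nat \<Rightarrow> real"
  assumes "finite X" "T \<subseteq> X"
  shows "sum w T \<le> sum w {i\<in>X. 0 \<le> w i}"
    and "sum w T = sum w {i\<in>X. 0 \<le> w i} \<Longrightarrow> T \<subseteq> {i\<in>X. 0 \<le> w i}"
proof -
  let ?P = "{i\<in>X. 0 \<le> w i}"
  have fT: "finite T" using assms finite_subset by blast
  have split: "sum w T = sum w (T \<inter> ?P) + sum w (T - ?P)"
    using fT by (simp add: sum.Int_Diff)
  have a: "sum w (T \<inter> ?P) \<le> sum w ?P"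
    by (rule sum_mono2) (use assms in auto)
  have b: "sum w (T - ?P) \<le> 0"
    by (rule sum_nonpos) (use assms in auto)
  show "sum w T \<le> sum w ?P" using split a b by linarith
  assume eq: "sum w T = sum w ?P"
  show "T \<subseteq> ?P"
  proof (rule ccontr)
    assume "\<not> T \<subseteq> ?P"
    then have ne: "T - ?P \<noteq> {}" by blast
    have "sum w (T - ?P) < sum (\<lambda>_. 0) (T - ?P)"
      by (rule sum_strict_mono) (use fT ne assms in auto)
    then show False using split a eq by simp
  qed
qed

lemma alloc_A:
  assumes "{S \<in> F. S \<subseteq> R} = Pow {0..<k}"
  shows "dra_alloc F phi R b = {i\<in>{0..<k}. 0 \<le> phi i (b i)}"
proof (rule alloc_eqI)
  let ?P = "{i\<in>{0..<k}. 0 \<le> phi i (b i)}"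
  have m: "T \<in> F \<and> T \<subseteq> R \<longleftrightarrow> T \<subseteq> {0..<k}" for T using assms by blast
  show "?P \<in> F" "?P \<subseteq> R" using m[of ?P] by auto
  fix T assume T: "T \<in> F" "T \<subseteq> R"
  then have T': "T \<subseteq> {0..<k}" using m by blast
  show "(\<Sum>i\<in>T. phi i (b i)) \<le> (\<Sum>i\<in>?P. phi i (b i))"
    using sum_pos_part(1)[of "{0..<k}" T "\<lambda>i. phi i (b i)"] T' by simp
  assume eq: "(\<Sum>i\<in>T. phi i (b i)) = (\<Sum>i\<in>?P. phi i (b i))" and ne: "T \<noteq> ?P"
  have "T \<subseteq> ?P" using sum_pos_part(2)[of "{0..<k}" T "\<lambda>i. phi i (b i)"] T' eq by simp
  then show "lex_pref ?P T" using ne by (intro lex_intro) auto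
qed

lemma alloc_B:
  fixes k :: nat
  assumes C: "{S \<in> F. S \<subseteq> R} = {S. S \<subseteq> {0..<k+1} \<and> \<not> {0,k} \<subseteq> S}"
    and k: "0 < k" and wk: "0 < phi k (b k)"
  shows "dra_alloc F phi R b = {i\<in>{1..<k}. 0 \<le> phi i (b i)} \<union> (if phi k (b k) \<le> phi 0 (b 0) then {0} else {k})"
proof (rule alloc_eqI)
  define w where "w i = phi i (b i)" for i
  let ?P = "{i\<in>{1..<k}. 0 \<le> w i}"
  let ?Z = "if w k \<le> w 0 then {0} else {k::nat}"
  let ?S = "?P \<union> ?Z"
  have Sdef: "{i\<in>{1..<k}. 0 \<le> phi i (b i)} \<union> (if phi k (b k) \<le> phi 0 (b 0) then {0} else {k}) = ?S"
    by (simp add: w_def)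
  have m: "T \<in> F \<and> T \<subseteq> R \<longleftrightarrow> T \<subseteq> {0..<k+1} \<and> \<not> {0,k} \<subseteq> T" for T using C by blast
  have Sin: "?S \<subseteq> {0..<k+1} \<and> \<not> {0,k} \<subseteq> ?S" using k by auto
  then show "{i\<in>{1..<k}. 0 \<le> phi i (b i)} \<union> (if phi k (b k) \<le> phi 0 (b 0) then {0} else {k}) \<in> F"
     "{i\<in>{1..<k}. 0 \<le> phi i (b i)} \<union> (if phi k (b k) \<le> phi 0 (b 0) then {0} else {k}) \<subseteq> R"
    using m[of ?S] Sdef by auto
  have disjPZ: "?P \<inter> ?Z = {}" by auto
  have sumS: "sum w ?S = sum w ?P + max (w 0) (w k)"
    by (subst sum.union_disjoint) (use disjPZ in auto)
  {
    fix T assume T: "T \<in> F" "T \<subseteq> R"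
    then have T': "T \<subseteq> {0..<k+1}" "\<not> {0,k} \<subseteq> T" using m by auto
    let ?A = "T \<inter> {1..<k}" and ?Q = "T \<inter> {0,k}"
    have fT: "finite T" using T' finite_subset by blast
    have TAQ: "T = ?A \<union> ?Q" using T'(1) by auto
    have dAQ: "?A \<inter> ?Q = {}" by auto
    have sumT: "sum w T = sum w ?A + sum w ?Q"
      by (subst TAQ, rule sum.union_disjoint) (use fT dAQ in auto)
    have Qc: "?Q = {} \<or> ?Q = {0} \<or> ?Q = {k}" using T'(2) by auto
    have wk': "0 < w k" using wk by (simp add: w_def)
    have Qle: "sum w ?Q \<le> max (w 0) (w k)"
      using Qc
    proof (elim disjE)
      assume "?Q = {}" then show ?thesis using wk' by simp
    next
      assume "?Q = {0}" then show ?thesis by simp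
    next
      assume "?Q = {k}" then show ?thesis by simp
    qed
    have Ale: "sum w ?A \<le> sum w ?P" using sum_pos_part(1)[of "{1..<k}" ?A w] by simp
    have le: "sum w T \<le> sum w ?S" using sumT sumS Qle Ale by linarith
    note T' fT sumT Qc Qle Ale le
  } note basic = this
  fix T assume T: "T \<in> F" "T \<subseteq> R"
  note B = basic[OF T]
  show "(\<Sum>i\<in>T. phi i (b i)) \<le> (\<Sum>i\<in>{i\<in>{1..<k}. 0 \<le> phi i (b i)} \<union> (if phi k (b k) \<le> phi 0 (b 0) then {0} else {k}). phi i (b i))"
    using B(8) Sdef unfolding w_def by simp
  assume eq: "(\<Sum>i\<in>T. phi i (b i)) = (\<Sum>i\<in>{i\<in>{1..<k}. 0 \<le> phi i (b i)} \<union> (if phi k (b k) \<le> phi 0 (b 0) then {0} else {k}). phi i (b i))"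
    and ne: "T \<noteq> {i\<in>{1..<k}. 0 \<le> phi i (b i)} \<union> (if phi k (b k) \<le> phi 0 (b 0) then {0} else {k})"
  have eq': "sum w T = sum w ?S" using eq Sdef unfolding w_def by simp
  have eqQ: "sum w (T \<inter> {0,k}) = max (w 0) (w k)" and eqA: "sum w (T \<inter> {1..<k}) = sum w ?P"
    using eq' B(4) B(6) B(7) sumS by linarith+
  have AP: "T \<inter> {1..<k} \<subseteq> ?P" using sum_pos_part(2)[of "{1..<k}" "T \<inter> {1..<k}" w] eqA by simp
  have "lex_pref ?S T"
  proof (rule lex_intro)
    show "finite ?S" by simp
    show "?S \<noteq> T" using ne Sdef by simp
    fix j assume j: "j \<in> T - ?S"
    have jQ: "j \<in> {0,k}"
    proof (rule ccontr)
      assume nj: "j \<notin> {0,k}"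
      have "j \<in> T" "j < k + 1" using j B(1) by auto
      then have "j \<in> T \<inter> {1..<k}" using nj by auto
      then have "j \<in> ?P" using AP by blast
      then show False using j by blast
    qed
    show "\<exists>i\<in>?S - T. i < j"
    proof (cases "w k \<le> w 0")
      case True
      then have "j = k" using jQ j by auto
      then have "0 \<notin> T" using j B(2) by auto
      then show ?thesis using True k \<open>j = k\<close> by auto
    next
      case False
      then have "j = 0" using jQ j by auto
      then have "T \<inter> {0,k} = {0}" using B(5) j k by auto
      then show ?thesis using eqQ False by simp
    qed
  qed
  then show "lex_pref ({i\<in>{1..<k}. 0 \<le> phi i (b i)} \<union> (if phi k (b k) \<le> phi 0 (b 0) then {0} else {k})) T"
    using Sdef by simp
qed

lemma Inf_ge: "0 \<le> (c::real) \<Longrightarrow> Inf {x. 0 \<le> x \<and> c \<le> x} = c"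
proof -
  assume "0 \<le> c"
  then have "{x. 0 \<le> x \<and> c \<le> x} = {c..}" by auto
  then show ?thesis by simp
qed

lemma revenue_sum: "revenue k f s v =
  (\<Sum>i<k. if i \<in> dra_outcome k s v then dra_crit (constr s) (\<lambda>i. vvirt (decl s i)) (revealed k s v) (bidvec k s v) i else 0)
   - f * real (card (conceal s v))"
  unfolding revenue_def by (simp add: sum.inter_restrict Int_commute)

abbreviation "phiE \<equiv> vvirt (exponential_density 1)"

definition hh :: "real \<Rightarrow> real" where "hh x = (if 1 \<le> x then 1 else 0)"

lemma revenue_honest: "revenue k f (honest k) v = (\<Sum>i<k. hh (v i))"
proof -
  have R: "revealed k (honest k) v = {0..<k}" by (simp add: revealed_def honest_def)
  have C: "{S \<in> constr (honest k). S \<subseteq> {0..<k}} = Pow {0..<k}"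
    by (auto simp: honest_def intro: order.trans[OF card_mono[of "{0..<k}"]])
  have A: "dra_alloc (constr (honest k)) (\<lambda>i. phiE) {0..<k} b = {i\<in>{0..<k}. 0 \<le> phiE (b i)}" for b
    using alloc_A[OF C] by simp
  have dec: "(\<lambda>i. vvirt (decl (honest k) i)) = (\<lambda>i. phiE)" by (simp add: honest_def)
  have "(if i \<in> dra_outcome k (honest k) v then dra_crit (constr (honest k)) (\<lambda>i. vvirt (decl (honest k) i)) (revealed k (honest k) v) (bidvec k (honest k) v) i else 0)
        = hh (v i)" if i: "i < k" for i
  proof -
    have out: "i \<in> dra_outcome k (honest k) v \<longleftrightarrow> 1 \<le> v i"
      unfolding dra_outcome_def dec R A using i by (simp add: bidvec_def vv_ge[of 0, simplified])
    have cr: "dra_crit (constr (honest k)) (\<lambda>i. phiE) {0..<k} (bidvec k (honest k) v) i = 1"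
      unfolding dra_crit_def A using i by (simp add: vv_ge[of 0, simplified] Inf_ge)
    show ?thesis using out cr by (simp add: dec R hh_def)
  qed
  then show ?thesis unfolding revenue_sum by (simp add: honest_def)
qed

definition Fd :: "nat \<Rightarrow> nat set set" where
  "Fd k = {S. S \<subseteq> {0..<k+1} \<and> \<not> {0,k} \<subseteq> S}"

definition strat :: "nat \<Rightarrow> real \<Rightarrow> auct_strategy" where
  "strat k B = \<lparr> nfake = 1, fbid = (\<lambda>_. B), decl = (\<lambda>_. exponential_density 1),
                constr = Fd k, conceal = (\<lambda>v. if 1 \<le> v 0 \<and> v 0 < B then {k} else {}) \<rparr>"

definition dd :: "real \<Rightarrow> real \<Rightarrow> real \<Rightarrow> real" where
  "dd f B x = (if B \<le> x then B - 1 else if 1 \<le> x then - f else 0)"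

lemma revenue_strat:
  assumes k: "1 \<le> k" and B: "1 < B"
  shows "revenue k f (strat k B) v = (\<Sum>i<k. hh (v i)) + dd f B (v 0)"
proof -
  have dec: "(\<lambda>i. vvirt (decl (strat k B) i)) = (\<lambda>i. phiE)" by (simp add: strat_def)
  have split0: "(\<Sum>i<k. g i) = g 0 + (\<Sum>i\<in>{1..<k}. g i)" for g :: "nat \<Rightarrow> real"
    using k by (simp add: lessThan_atLeast0 sum.atLeast_Suc_lessThan)
  let ?T = "\<lambda>i. (if i \<in> dra_outcome k (strat k B) v then dra_crit (constr (strat k B)) (\<lambda>i. vvirt (decl (strat k B) i)) (revealed k (strat k B) v) (bidvec k (strat k B) v) i else 0)"
  show ?thesis
  proof (cases "1 \<le> v 0 \<and> v 0 < B")
    case True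
    have R: "revealed k (strat k B) v = {0..<k}" using True by (auto simp: revealed_def strat_def)
    have C: "{S \<in> constr (strat k B). S \<subseteq> {0..<k}} = Pow {0..<k}"
      by (auto simp: strat_def Fd_def)
    have A: "dra_alloc (constr (strat k B)) (\<lambda>i. phiE) {0..<k} b = {i\<in>{0..<k}. 0 \<le> phiE (b i)}" for b
      using alloc_A[OF C] by simp
    have "?T i = hh (v i)" if i: "i < k" for i
    proof -
      have out: "i \<in> dra_outcome k (strat k B) v \<longleftrightarrow> 1 \<le> v i"
        unfolding dra_outcome_def dec R A using i by (simp add: bidvec_def vv_ge[of 0, simplified])
      have cr: "dra_crit (constr (strat k B)) (\<lambda>i. phiE) {0..<k} (bidvec k (strat k B) v) i = 1"
        unfolding dra_crit_def A using i by (simp add: vv_ge[of 0, simplified] Inf_ge)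
      show ?thesis using out cr by (simp add: dec R hh_def)
    qed
    then have "(\<Sum>i<k. ?T i) = (\<Sum>i<k. hh (v i))" by simp
    moreover have "card (conceal (strat k B) v) = 1" using True by (simp add: strat_def)
    moreover have "dd f B (v 0) = - f" using True by (simp add: dd_def)
    ultimately show ?thesis unfolding revenue_sum by simp
  next
    case False
    have R: "revealed k (strat k B) v = {0..<k+1}" using False by (auto simp: revealed_def strat_def)
    have C: "{S \<in> constr (strat k B). S \<subseteq> {0..<k+1}} = {S. S \<subseteq> {0..<k+1} \<and> \<not> {0,k} \<subseteq> S}"
      by (auto simp: strat_def Fd_def)
    have k0: "0 < k" using k by simp
    have A: "dra_alloc (constr (strat k B)) (\<lambda>i. phiE) {0..<k+1} b =
       {i\<in>{1..<k}. 0 \<le> phiE (b i)} \<union> (if phiE (b k) \<le> phiE (b 0) then {0} else {k})"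
      if "b k = B" for b
      using alloc_B[OF C k0, of "\<lambda>i. phiE" b] that B by (simp add: vv_exp)
    have bk: "bidvec k (strat k B) v k = B" by (simp add: bidvec_def strat_def)
    have bk': "((bidvec k (strat k B) v)(i := x)) k = B" if "i < k" for i x using bk that by simp
    have phB: "phiE B = B - 1" using B by (simp add: vv_exp)
    have Ti: "?T i = hh (v i)" if i: "1 \<le> i" "i < k" for i
    proof -
      have out: "i \<in> dra_outcome k (strat k B) v \<longleftrightarrow> 1 \<le> v i"
        unfolding dra_outcome_def dec R A[of "bidvec k (strat k B) v", OF bk] using i by (auto simp: bidvec_def vv_ge[of 0, simplified])
      have cr: "dra_crit (constr (strat k B)) (\<lambda>i. phiE) {0..<k+1} (bidvec k (strat k B) v) i = 1"
        unfolding dra_crit_def A[of "(bidvec k (strat k B) v)(i := x)" for x, OF bk'[OF i(2)]] using i by (simp add: vv_ge[of 0, simplified] Inf_ge)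
      show ?thesis using out cr by (simp add: dec R hh_def)
    qed
    have T0: "?T 0 = (if B \<le> v 0 then B else 0)"
    proof -
      have out: "0 \<in> dra_outcome k (strat k B) v \<longleftrightarrow> B \<le> v 0"
        unfolding dra_outcome_def dec R A[of "bidvec k (strat k B) v", OF bk] using k0 B by (auto simp: bidvec_def strat_def vv_exp)
      have cr: "dra_crit (constr (strat k B)) (\<lambda>i. phiE) {0..<k+1} (bidvec k (strat k B) v) 0 = B"
      proof -
        have "{x. 0 \<le> x \<and> 0 \<in> dra_alloc (constr (strat k B)) (\<lambda>i. phiE) {0..<k+1} ((bidvec k (strat k B) v)(0 := x))} = {B..}"
          unfolding A[of "(bidvec k (strat k B) v)(0 := x)" for x, OF bk'[OF k0]] using k0 B
          by (auto simp: bk phB vv_exp)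
        then show ?thesis unfolding dra_crit_def by simp
      qed
      show ?thesis using out cr by (simp add: dec R)
    qed
    have "(\<Sum>i<k. ?T i) = ?T 0 + (\<Sum>i\<in>{1..<k}. hh (v i))" using Ti by (simp add: split0)
    moreover have "(\<Sum>i<k. hh (v i)) = hh (v 0) + (\<Sum>i\<in>{1..<k}. hh (v i))" by (rule split0)
    moreover have "card (conceal (strat k B) v) = 0" using False by (simp add: strat_def)
    moreover have "?T 0 = hh (v 0) + dd f B (v 0)" using T0 False B by (auto simp: dd_def hh_def)
    ultimately show ?thesis unfolding revenue_sum by simp
  qed
qed

lemma exp_ps: "prob_space (density lborel (exponential_density 1))"
  by (rule prob_space_exponential_density) simp

lemma valid_exp: "valid_dist (exponential_density 1)"
proof -
  interpret P: prob_space "density lborel (exponential_density 1)" by (rule exp_ps)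
  have nn: "AE x in lborel. 0 \<le> exponential_density 1 x"
    by (simp add: exponential_density_nonneg)
  have "integrable (density lborel (exponential_density 1)) (\<lambda>_. 1::real)" by simp
  then have int: "integrable lborel (exponential_density 1)"
    using integrable_density[of "\<lambda>_. 1::real" lborel "exponential_density 1"] nn by simp
  have "integral\<^sup>L (density lborel (exponential_density 1)) (\<lambda>_. 1::real) = 1"
    using P.prob_space by simp
  then have i1: "integral\<^sup>L lborel (exponential_density 1) = 1"
    using integral_density[of "\<lambda>_. 1::real" lborel "exponential_density 1"] nn by simp
  have "(exponential_density 1 has_integral 1) UNIV"
    using has_integral_integral_real[OF int] i1 by simp
  moreover have "(\<lambda>x. if x \<in> {0..} then exponential_density 1 x else 0) = exponential_density 1"
    by (auto simp: exponential_density_def)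
  ultimately have hi: "(exponential_density 1 has_integral 1) {0..}"
    using has_integral_restrict_UNIV[of "{0..}" "exponential_density 1" 1] by simp
  have "continuous_on {0..} (\<lambda>t::real. exp (- t))" by (intro continuous_intros)
  then have co: "continuous_on {0..} (exponential_density 1)"
    by (rule continuous_on_eq) (auto simp: exponential_density_def)
  show ?thesis unfolding valid_dist_def using hi co by (auto simp: exponential_density_def)
qed

lemma matroid_Fd: "0 < k \<Longrightarrow> matroid {0..<k+1} (Fd k)"
  unfolding matroid_def
proof (intro conjI allI impI ballI)
  assume k: "0 < k"
  show "finite {0..<k+1}" by simp
  show "{} \<in> Fd k" by (simp add: Fd_def)
  show "S \<subseteq> {0..<k+1}" if "S \<in> Fd k" for S using that by (simp add: Fd_def)
  show "S \<in> Fd k" if "T \<in> Fd k" "S \<subseteq> T" for S T using that by (auto simp: Fd_def)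
  fix S T assume S: "S \<in> Fd k" and T: "T \<in> Fd k" and c: "card S < card T"
  show "\<exists>x\<in>T - S. insert x S \<in> Fd k"
  proof (rule ccontr)
    assume no: "\<not> (\<exists>x\<in>T - S. insert x S \<in> Fd k)"
    have fS: "finite S" "finite T" using S T by (auto simp: Fd_def intro: finite_subset)
    have TS: "T - S \<subseteq> {0,k}"
    proof
      fix x assume x: "x \<in> T - S"
      then have "insert x S \<notin> Fd k" using no by blast
      show "x \<in> {0,k}"
      proof (rule ccontr)
        assume nx: "x \<notin> {0,k}"
        have "insert x S \<subseteq> {0..<k+1}" using x S T unfolding Fd_def by blast
        moreover have "\<not> {0,k} \<subseteq> S" using S unfolding Fd_def by blast
        ultimately have "insert x S \<in> Fd k" using nx unfolding Fd_def by blast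
        then show False using \<open>insert x S \<notin> Fd k\<close> by blast
      qed
    qed
    have "card (T - S) \<le> card (S - T)"
    proof (cases "T - S = {}")
      case True then show ?thesis by (subst True) simp
    next
      case False
      then obtain x where x: "x \<in> T - S" by blast
      have xk: "x \<in> {0,k}" using x TS by blast
      have one: "T - S = {x}"
      proof -
        have "T - S \<subseteq> {0,k}" by (rule TS)
        moreover have "\<not> {0,k} \<subseteq> T" using T by (simp add: Fd_def)
        ultimately show ?thesis using x xk
        proof -
          have "z = x" if z: "z \<in> T - S" for z
          proof (rule ccontr)
            assume "z \<noteq> x"
            then have "{0,k} \<subseteq> T" using z x xk TS by auto
            then show False using T by (simp add: Fd_def)
          qed
          then show ?thesis using x by blast
        qed
      qed
      define y where "y = (if x = 0 then k else 0)"
      have y: "{x,y} = {0,k}" "y \<noteq> x" using xk k by (auto simp: y_def)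
      have "insert x S \<notin> Fd k" using no x by blast
      moreover have "insert x S \<subseteq> {0..<k+1}" using x S T unfolding Fd_def by blast
      ultimately have "{0,k} \<subseteq> insert x S" unfolding Fd_def mem_Collect_eq by blast
      then have "y \<in> S" using y by blast
      moreover have "y \<notin> T"
      proof
        assume "y \<in> T"
        moreover have "x \<in> T" using x by blast
        ultimately have "{x,y} \<subseteq> T" by blast
        then have "{0,k} \<subseteq> T" using y(1) by simp
        then show False using T by (simp add: Fd_def)
      qed
      ultimately have "y \<in> S - T" by (rule DiffI)
      then have "S - T \<noteq> {}" by blast
      then have "0 < card (S - T)" using fS(1) by (simp add: card_gt_0_iff)
      then have "1 \<le> card (S - T)" by linarith
      then show ?thesis by (subst one) simp
    qed
    moreover have "card T = card (T \<inter> S) + card (T - S)" "card S = card (S \<inter> T) + card (S - T)"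
      using fS by (simp_all add: card_Int_Diff)
    ultimately show False using c by (simp add: Int_commute)
  qed
qed

lemma admissible_strat:
  assumes k: "1 \<le> k" and B: "1 < B"
  shows "admissible k (strat k B)"
proof -
  have 1: "\<forall>i\<in>{k..<k + nfake (strat k B)}. 0 \<le> fbid (strat k B) i" using B by (simp add: strat_def)
  have 2: "\<forall>i<k + nfake (strat k B). valid_dist (decl (strat k B) i)" by (simp add: strat_def valid_exp)
  have 3: "matroid {0..<k + nfake (strat k B)} (constr (strat k B))" using k matroid_Fd[of k] by (simp add: strat_def)
  have 4: "\<forall>v. conceal (strat k B) v \<subseteq> {k..<k + nfake (strat k B)}" by (simp add: strat_def)
  have 5: "\<forall>v. card (dra_outcome k (strat k B) v \<inter> {..<k}) \<le> k"
    by (metis card_lessThan card_mono finite_lessThan inf_le2)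
  show ?thesis unfolding admissible_def using 1 2 3 4 5 by blast
qed

abbreviation "ME \<equiv> density lborel (exponential_density 1)"

lemma space_ME: "space ME = UNIV" by simp

lemma meas_ge:
  assumes a: "0 \<le> a"
  shows "measure ME {a..} = exp (- a)"
proof -
  interpret P: prob_space ME by (rule exp_ps)
  have "emeasure ME {..a} = ennreal (1 - exp (- a))"
    using emeasure_erlang_density[of 1 0 a] a by (simp add: erlang_CDF_def)
  then have le: "measure ME {..a} = 1 - exp (- a)"
    using a by (simp add: measure_def)
  have "measure ME (space ME - {..a}) = 1 - measure ME {..a}"
    by (rule P.prob_compl) simp
  moreover have "space ME - {..a} = {a<..}" by auto
  ultimately have gt: "measure ME {a<..} = exp (- a)" using le by simp
  have "emeasure ME {a} = (\<integral>\<^sup>+ x. ennreal (exponential_density 1 x) * indicator {a} x \<partial>lborel)"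
    by (rule emeasure_density) simp_all
  also have "\<dots> = (\<integral>\<^sup>+ (x::real). 0 \<partial>lborel)"
    by (rule nn_integral_cong_AE) (use AE_lborel_singleton[of a] in \<open>auto elim!: eventually_mono\<close>)
  finally have sing: "measure ME {a} = 0" by (simp add: measure_def)
  have "{a..} = {a<..} \<union> {a}" by auto
  moreover have "measure ME ({a<..} \<union> {a}) = measure ME {a<..} + measure ME {a}"
    by (rule P.finite_measure_Union) auto
  ultimately show ?thesis using gt sing by simp
qed

lemma hh_ind: "hh = indicator {1..}"
  by (auto simp: hh_def indicator_def fun_eq_iff)

lemma dd_ind: "1 < B \<Longrightarrow> dd f B = (\<lambda>x. (B - 1) * indicator {B..} x - f * indicator {1..} x + f * indicator {B..} x)"
  by (auto simp: dd_def indicator_def fun_eq_iff)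

lemma int_dd:
  assumes B: "1 < B"
  shows "integrable ME (dd f B)"
    and "integral\<^sup>L ME (dd f B) = (B - 1) * exp (- B) - f * exp (- 1) + f * exp (- B)"
proof -
  interpret P: prob_space ME by (rule exp_ps)
  have i: "integrable ME (indicator {c..} :: real \<Rightarrow> real)" for c
    by (rule integrable_real_indicator) (simp_all add: less_top[symmetric])
  show "integrable ME (dd f B)" unfolding dd_ind[OF B] using i by simp
  show "integral\<^sup>L ME (dd f B) = (B - 1) * exp (- B) - f * exp (- 1) + f * exp (- B)"
    unfolding dd_ind[OF B] using i B by (simp add: meas_ge)
qed

lemma key_t:
  fixes f t :: real
  assumes f: "f < 1" and t: "t = min (1/2) ((1 - f) / 2)"
  shows "0 < t" "f * (exp t - 1) < t"
proof -
  show tp: "0 < t" using f t by simp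
  show "f * (exp t - 1) < t"
  proof (cases "f \<le> 0")
    case True
    have "0 \<le> exp t - 1" using tp by simp
    then have "f * (exp t - 1) \<le> 0" using True by (simp add: mult_nonpos_nonneg)
    then show ?thesis using tp by linarith
  next
    case False
    then have tf: "t = (1 - f) / 2" using t f by simp
    have "t \<le> 1" using tf False by simp
    then have e: "exp t - 1 \<le> t + t^2" using exp_bound[of t] tp by simp
    have "f * (exp t - 1) \<le> f * (t + t^2)" using e False by simp
    also have "f * (t + t^2) = t * (f * (1 + t))" by (simp add: algebra_simps power2_eq_square)
    also have "f * (1 + t) < 1"
    proof -
      have "f * (1 + t) = f + f * (1 - f) / 2" by (subst tf) (simp add: algebra_simps)
      also have "f * (1 - f) / 2 < 1 - f"
      proof -
        have "f * (1 - f) < 2 * (1 - f)" using f by (intro mult_strict_right_mono) auto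
        then show ?thesis by simp
      qed
      finally show ?thesis by linarith
    qed
    then have "t * (f * (1 + t)) < t * 1" using tp by (intro mult_strict_left_mono) auto
    finally show ?thesis by simp
  qed
qed

lemma key_B:
  fixes f :: real
  assumes f: "f < 1"
  obtains B where "1 < B" "0 < (B - 1) * exp (- B) - f * exp (- 1) + f * exp (- B)"
proof -
  define t where "t = min (1/2) ((1 - f) / 2)"
  note kt = key_t[OF f t_def]
  have e1: "exp (- 1) = exp (- (1 + t)) * exp t" by (simp add: exp_add[symmetric])
  have "(1 + t - 1) * exp (- (1 + t)) - f * exp (- 1) + f * exp (- (1 + t)) = exp (- (1 + t)) * (t - f * (exp t - 1))"
    unfolding e1 by (simp add: algebra_simps)
  moreover have "0 < exp (- (1 + t)) * (t - f * (exp t - 1))" using kt by simp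
  ultimately show ?thesis using that[of "1 + t"] kt by simp
qed

theorem mainTheorem5:
  fixes k :: nat and f :: real
  assumes "1 \<le> k" and "f < 1"
  shows "\<not> dra_credible k f"
proof
  assume cred: "dra_credible k f"
  obtain B where B: "1 < B" and pos: "0 < (B - 1) * exp (- B) - f * exp (- 1) + f * exp (- B)"
    using key_B[OF assms(2)] by blast
  let ?P = "bids_measure k"
  have comp: "distr ?P ME (\<lambda>v. v i) = ME" if "i < k" for i
    unfolding bids_measure_def by (rule distr_PiM_component) (use exp_ps that in auto)
  have mc: "(\<lambda>v. v i) \<in> measurable ?P ME" if "i < k" for i
    unfolding bids_measure_def using that by (intro measurable_component_singleton) simp
  have hhm: "hh \<in> borel_measurable ME" unfolding hh_ind by simp
  have ddm: "dd f B \<in> borel_measurable ME" using int_dd(1)[OF B] by (rule borel_measurable_integrable)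
  have ihh: "integrable ?P (\<lambda>v. hh (v i))" if i: "i < k" for i
  proof -
    interpret PE: prob_space ME by (rule exp_ps)
    have "integrable ME hh" unfolding hh_ind
      by (rule integrable_real_indicator) (simp_all add: less_top[symmetric])
    then have "integrable (distr ?P ME (\<lambda>v. v i)) hh" using comp[OF i] by simp
    then show ?thesis using integrable_distr_eq[OF mc[OF i] hhm] by simp
  qed
  have iH: "integrable ?P (\<lambda>v. \<Sum>i<k. hh (v i))"
  proof (rule Bochner_Integration.integrable_sum)
    fix i assume "i \<in> {..<k}"
    then show "integrable ?P (\<lambda>v. hh (v i))" using ihh by simp
  qed
  have k0: "0 < k" using assms(1) by simp
  have idd: "integrable ?P (\<lambda>v. dd f B (v 0))"
    using int_dd(1)[OF B] comp[OF k0] integrable_distr_eq[OF mc[OF k0] ddm] by simp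
  have Idd: "integral\<^sup>L ?P (\<lambda>v. dd f B (v 0)) = (B - 1) * exp (- B) - f * exp (- 1) + f * exp (- B)"
    using integral_distr[OF mc[OF k0] ddm] comp[OF k0] int_dd(2)[OF B] by simp
  have rs: "revenue k f (strat k B) = (\<lambda>v. (\<Sum>i<k. hh (v i)) + dd f B (v 0))"
    using revenue_strat[OF assms(1) B] by (simp add: fun_eq_iff)
  have rh: "revenue k f (honest k) = (\<lambda>v. \<Sum>i<k. hh (v i))"
    using revenue_honest by (simp add: fun_eq_iff)
  have irs: "integrable ?P (revenue k f (strat k B))" unfolding rs using iH idd by simp
  have "exp_revenue k f (strat k B) \<le> exp_revenue k f (honest k)"
    using cred admissible_strat[OF assms(1) B] irs unfolding dra_credible_def by blast
  moreover have "exp_revenue k f (strat k B) = exp_revenue k f (honest k) + ((B - 1) * exp (- B) - f * exp (- 1) + f * exp (- B))"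
    unfolding exp_revenue_def rs rh using iH idd Idd by simp
  ultimately show False using pos by simp
qed

end
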